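(* Let $\varphi_0,\varphi_1\in\mathrm{Mon}_+$ and let $d$ be the distance defined by $d(\varphi_0,\varphi_1)^2=\min\mathcal{L}(v)$, the minimum being over all $v\in L^2([0,1],H^1_0([0,1]))$ admitting a Lagrangian flow $\varphi$ with $\varphi(0,\cdot)=\varphi_0$, $\varphi(1,\cdot)=\varphi_1$, where $\mathcal{L}(v)=\int_0^1\int_0^1 v^2+\tfrac14(\partial_x v)^2\,dx\,dt$. Then $$\sup_{x\in[0,1]}|\varphi_0(x)-\varphi_1(x)|\le 2\,d(\varphi_0,\varphi_1),$$ where the supremum is a pointwise supremum (not an essential supremum).
   Context: $\mathrm{Mon}_+$ denotes the set of nondecreasing functions $f:[0,1]\to[0,1]$ with $f(0)=0$ and $f(1)=1$. Definition (Lagrangian flow): let $v\in L^1([0,1],C([0,1]))$. A map $\varphi:[0,1]\times[0,1]\to[0,1]$, $(t,x)\mapsto\varphi(t,x)$, is a Lagrangian flow associated with $v$ if (i) $x\mapsto\varphi(t,x)$ is nondecreasing for every $t$, and (ii) for every $x$ the map $t\mapsto\varphi(t,x)$ is absolutely continuous and $\varphi(t,x)-\varphi(s,x)=\int_s^t v(r,\varphi(r,x))\,dr$ for all $0\le s<t\le 1$. *)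

theory Defs
  imports "HOL-Analysis.Analysis"
begin

text \<open>Mon_+ : nondecreasing maps [0,1] -> [0,1] with f 0 = 0 and f 1 = 1
  (functions are real => real; only values on [0,1] matter).\<close>
definition Mon_plus :: "(real \<Rightarrow> real) set" where
  "Mon_plus = {f. mono_on {0..1} f \<and> f ` {0..1} \<subseteq> {0..1} \<and> f 0 = 0 \<and> f 1 = 1}"

text \<open>Membership of v in L^2([0,1], H^1_0([0,1])), witnessed by its spatial
  derivative w = d/dx v: w is jointly measurable and square integrable on
  [0,1]^2, and for every time t in [0,1], v(t,.) is the antiderivative of
  w(t,.) vanishing at x = 0 and at x = 1 (1D characterisation of H^1_0 as
  absolutely continuous functions with L^2 derivative and zero trace).\<close>
definition L2_H10 :: "(real \<Rightarrow> real \<Rightarrow> real) \<Rightarrow> (real \<Rightarrow> real \<Rightarrow> real) \<Rightarrow> bool" where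
  "L2_H10 v w \<longleftrightarrow>
     (\<lambda>p. w (fst p) (snd p)) \<in> borel_measurable lborel \<and>
     set_integrable lborel ({0..1} \<times> {0..1}) (\<lambda>p. (w (fst p) (snd p))\<^sup>2) \<and>
     (\<forall>t\<in>{0..1}. set_integrable lborel {0..1} (w t) \<and>
        (\<forall>x\<in>{0..1}. v t x = (LINT y:{0..x}|lborel. w t y)) \<and>
        v t 1 = 0)"

definition energy :: "(real \<Rightarrow> real \<Rightarrow> real) \<Rightarrow> (real \<Rightarrow> real \<Rightarrow> real) \<Rightarrow> real" where
  "energy v w = (LINT t:{0..1}|lborel. LINT x:{0..1}|lborel. (v t x)\<^sup>2 + (1/4) * (w t x)\<^sup>2)"

text \<open>Lagrangian flow associated with v (phi t x = phi(t,x)).  Absolute continuity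
  of t -> phi(t,x) is implied by the integral identity with integrable integrand.\<close>
definition lagrangian_flow :: "(real \<Rightarrow> real \<Rightarrow> real) \<Rightarrow> (real \<Rightarrow> real \<Rightarrow> real) \<Rightarrow> bool" where
  "lagrangian_flow v \<phi> \<longleftrightarrow>
     (\<forall>t\<in>{0..1}. \<forall>x\<in>{0..1}. \<phi> t x \<in> {0..1}) \<and>
     (\<forall>t\<in>{0..1}. mono_on {0..1} (\<phi> t)) \<and>
     (\<forall>x\<in>{0..1}. \<forall>s t. 0 \<le> s \<and> s < t \<and> t \<le> 1 \<longrightarrow>
        set_integrable lborel {s..t} (\<lambda>r. v r (\<phi> r x)) \<and>
        \<phi> t x - \<phi> s x = (LINT r:{s..t}|lborel. v r (\<phi> r x)))"

definition admissible :: "(real \<Rightarrow> real) \<Rightarrow> (real \<Rightarrow> real) \<Rightarrow>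
    ((real \<Rightarrow> real \<Rightarrow> real) \<times> (real \<Rightarrow> real \<Rightarrow> real)) set" where
  "admissible \<phi>0 \<phi>1 = {(v, w). L2_H10 v w \<and>
     (\<exists>\<phi>. lagrangian_flow v \<phi> \<and> (\<forall>x\<in>{0..1}. \<phi> 0 x = \<phi>0 x \<and> \<phi> 1 x = \<phi>1 x))}"

text \<open>d(phi0,phi1) = sqrt(min L) = inf of sqrt(L(v)) over admissible v
  (taken in ereal so that it is meaningful without presupposing the minimum exists).\<close>
definition dist_Mon :: "(real \<Rightarrow> real) \<Rightarrow> (real \<Rightarrow> real) \<Rightarrow> ereal" where
  "dist_Mon \<phi>0 \<phi>1 = (INF p \<in> admissible \<phi>0 \<phi>1. ereal (sqrt (energy (fst p) (snd p))))"

end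

theory Submission
  imports Defs
begin

lemma wmeas: fixes w :: "real \<Rightarrow> real \<Rightarrow> real"
  assumes "(\<lambda>p. w (fst p) (snd p)) \<in> borel_measurable (lborel :: (real\<times>real) measure)"
  shows "(\<lambda>p. w (fst p) (snd p) :: real) \<in> borel_measurable (lborel \<Otimes>\<^sub>M lborel)"
  using assms by (simp add: lborel_prod)

lemma wmeas2: fixes w :: "real \<Rightarrow> real \<Rightarrow> real"
  assumes "(\<lambda>p. w (fst p) (snd p)::real) \<in> borel_measurable (lborel \<Otimes>\<^sub>M lborel)"
  shows "w t \<in> borel_measurable lborel"
proof -
  have "(\<lambda>y. (\<lambda>p. w (fst p) (snd p)) (t, y)) \<in> borel_measurable lborel"
    using assms by measurable
  then show ?thesis by simp
qed

lemma Vmeas: fixes w :: "real \<Rightarrow> real \<Rightarrow> real"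
  assumes [measurable]: "(\<lambda>p. w (fst p) (snd p)::real) \<in> borel_measurable (lborel \<Otimes>\<^sub>M lborel)"
  shows "(\<lambda>p. LINT y:{0..snd p}|lborel. w (fst p) y) \<in> borel_measurable (lborel \<Otimes>\<^sub>M lborel)"
proof -
  have m: "(\<lambda>(p, y). indicator {0..snd p} y *\<^sub>R w (fst p) y :: real) \<in> borel_measurable ((lborel \<Otimes>\<^sub>M lborel) \<Otimes>\<^sub>M lborel)"
  proof -
    have a: "(\<lambda>q. w (fst (fst q)) (snd q)) \<in> borel_measurable ((lborel \<Otimes>\<^sub>M lborel) \<Otimes>\<^sub>M (lborel::real measure))"
      using measurable_compose[OF _ assms, of "\<lambda>q. (fst (fst q), snd q)" "(lborel \<Otimes>\<^sub>M lborel) \<Otimes>\<^sub>M (lborel::real measure)"] by simp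
    have b: "(\<lambda>q. indicator {0..snd (fst q)} (snd q) :: real) \<in> borel_measurable ((lborel \<Otimes>\<^sub>M lborel) \<Otimes>\<^sub>M (lborel::real measure))"
      unfolding indicator_def atLeastAtMost_iff by measurable
    show ?thesis using borel_measurable_times[OF b a] by (simp add: case_prod_beta')
  qed
  show ?thesis unfolding set_lebesgue_integral_def
    using lborel.borel_measurable_lebesgue_integral[of "\<lambda>p y. indicator {0..snd p} y *\<^sub>R w (fst p) y", OF m] by simp
qed

lemma core:
  fixes v w \<phi> :: "real \<Rightarrow> real \<Rightarrow> real"
  assumes L: "L2_H10 v w" and F: "lagrangian_flow v \<phi>" and x: "x \<in> {0..1}"
  shows "\<bar>\<phi> 1 x - \<phi> 0 x\<bar> \<le> 2 * sqrt (energy v w)"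
proof -
  define I where "I = {0..1::real}"
  have wm[measurable]: "(\<lambda>p. w (fst p) (snd p)) \<in> borel_measurable (lborel \<Otimes>\<^sub>M lborel)"
    using L unfolding L2_H10_def by (intro wmeas) auto
  have wint: "integrable (lborel \<Otimes>\<^sub>M lborel) (\<lambda>p. indicator (I \<times> I) p * (w (fst p) (snd p))\<^sup>2)"
    using L unfolding L2_H10_def set_integrable_def I_def by (simp add: lborel_prod)
  have wt: "\<And>t. t \<in> I \<Longrightarrow> set_integrable lborel I (w t) \<and> (\<forall>x\<in>I. v t x = (LINT y:{0..x}|lborel. w t y))"
    using L unfolding L2_H10_def I_def by auto
  have wtm[measurable]: "\<And>t. w t \<in> borel_measurable lborel" by (rule wmeas2[OF wm])
  define N where "N t = (\<integral>\<^sup>+ y. ennreal (indicator I y * \<bar>w t y\<bar>) \<partial>lborel)" for t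
  define Q2 where "Q2 t = (\<integral>\<^sup>+ y. ennreal (indicator I y * (w t y)\<^sup>2) \<partial>lborel)" for t
  define A where "A = integral\<^sup>L (lborel \<Otimes>\<^sub>M lborel) (\<lambda>p. indicator (I \<times> I) p * (w (fst p) (snd p))\<^sup>2)"
  have vbound: "ennreal \<bar>v t z\<bar> \<le> N t" if t: "t \<in> I" and z: "z \<in> I" for t z
  proof -
    have "v t z = (LINT y:{0..z}|lborel. w t y)" using wt[OF t] z by auto
    also have "\<dots> = integral\<^sup>L lborel (\<lambda>y. indicator {0..z} y *\<^sub>R w t y)"
      by (simp add: set_lebesgue_integral_def)
    finally have eq: "v t z = \<dots>" .
    have "set_integrable lborel {0..z} (w t)"
      by (rule set_integrable_subset[of _ I]) (use wt[OF t] z I_def in auto)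
    then have "norm (integral\<^sup>L lborel (\<lambda>y. indicator {0..z} y *\<^sub>R w t y)) \<le> (\<integral>\<^sup>+ y. norm (indicator {0..z} y *\<^sub>R w t y) \<partial>lborel)"
      unfolding set_integrable_def by (rule integral_norm_bound_ennreal)
    also have "\<dots> \<le> N t" unfolding N_def
      by (intro nn_integral_mono ennreal_leI) (use z in \<open>auto simp: I_def indicator_def\<close>)
    finally show ?thesis using eq by simp
  qed
  have CS: "(N t)\<^sup>2 \<le> Q2 t" for t
  proof -
    have "(N t)\<^sup>2 = (\<integral>\<^sup>+ y. ennreal (indicator I y * \<bar>w t y\<bar>) * ennreal (indicator I y) \<partial>lborel)\<^sup>2"
      unfolding N_def by (intro arg_cong[where f="\<lambda>a. a\<^sup>2"] nn_integral_cong) (auto simp: indicator_def)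
    also have "\<dots> \<le> (\<integral>\<^sup>+ y. (ennreal (indicator I y * \<bar>w t y\<bar>))\<^sup>2 \<partial>lborel) * (\<integral>\<^sup>+ y. (ennreal (indicator I y))\<^sup>2 \<partial>lborel)"
      by (rule Cauchy_Schwarz_nn_integral) (auto simp: I_def)
    also have "(\<integral>\<^sup>+ y. (ennreal (indicator I y))\<^sup>2 \<partial>lborel) = (\<integral>\<^sup>+ y. indicator I y \<partial>lborel)"
      by (intro nn_integral_cong) (auto simp: indicator_def)
    also have "\<dots> = 1" by (simp add: I_def)
    also have "(\<integral>\<^sup>+ y. (ennreal (indicator I y * \<bar>w t y\<bar>))\<^sup>2 \<partial>lborel) = Q2 t"
      unfolding Q2_def by (intro nn_integral_cong) (auto simp: indicator_def ennreal_power)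
    finally show ?thesis by simp
  qed
  have sqm[measurable]: "I \<times> I \<in> sets (lborel \<Otimes>\<^sub>M (lborel::real measure))"
    unfolding I_def by (intro pair_measureI) auto
  have Anonneg: "0 \<le> A" unfolding A_def by (intro integral_nonneg_AE) auto
  have Qeq: "(\<integral>\<^sup>+ p. ennreal (indicator (I \<times> I) p * (w (fst p) (snd p))\<^sup>2) \<partial>(lborel \<Otimes>\<^sub>M lborel)) = ennreal A"
    unfolding A_def by (rule nn_integral_eq_integral[OF wint]) auto
  have Qton: "(\<integral>\<^sup>+ p. ennreal (indicator (I \<times> I) p * (w (fst p) (snd p))\<^sup>2) \<partial>(lborel \<Otimes>\<^sub>M lborel))
      = (\<integral>\<^sup>+ t. (if t \<in> I then Q2 t else 0) \<partial>lborel)"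
  proof -
    have "(\<integral>\<^sup>+ p. ennreal (indicator (I \<times> I) p * (w (fst p) (snd p))\<^sup>2) \<partial>(lborel \<Otimes>\<^sub>M lborel))
       = (\<integral>\<^sup>+ t. \<integral>\<^sup>+ y. ennreal (indicator (I \<times> I) (t, y) * (w t y)\<^sup>2) \<partial>lborel \<partial>lborel)"
    proof -
      have m: "(\<lambda>p. ennreal (indicator (I \<times> I) p * (w (fst p) (snd p))\<^sup>2)) \<in> borel_measurable (lborel \<Otimes>\<^sub>M lborel)"
        by measurable
      show ?thesis using lborel.nn_integral_fst[OF m] by simp
    qed
    also have "\<dots> = (\<integral>\<^sup>+ t. (if t \<in> I then Q2 t else 0) \<partial>lborel)"
      unfolding Q2_def by (intro nn_integral_cong) (auto simp: indicator_def)
    finally show ?thesis .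
  qed
  define S where "S = (\<integral>\<^sup>+ p. ennreal (indicator (I \<times> I) p * \<bar>w (fst p) (snd p)\<bar>) \<partial>(lborel \<Otimes>\<^sub>M lborel))"
  have Ston: "S = (\<integral>\<^sup>+ t. (if t \<in> I then N t else 0) \<partial>lborel)"
  proof -
    have "S = (\<integral>\<^sup>+ t. \<integral>\<^sup>+ y. ennreal (indicator (I \<times> I) (t, y) * \<bar>w t y\<bar>) \<partial>lborel \<partial>lborel)"
    proof -
      have m: "(\<lambda>p. ennreal (indicator (I \<times> I) p * \<bar>w (fst p) (snd p)\<bar>)) \<in> borel_measurable (lborel \<Otimes>\<^sub>M lborel)"
        by measurable
      show ?thesis unfolding S_def using lborel.nn_integral_fst[OF m] by simp
    qed
    also have "\<dots> = (\<integral>\<^sup>+ t. (if t \<in> I then N t else 0) \<partial>lborel)"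
      unfolding N_def by (intro nn_integral_cong) (auto simp: indicator_def)
    finally show ?thesis .
  qed
  have SQ: "S\<^sup>2 \<le> ennreal A"
  proof -
    have "S\<^sup>2 = (\<integral>\<^sup>+ p. ennreal (indicator (I \<times> I) p * \<bar>w (fst p) (snd p)\<bar>) * ennreal (indicator (I \<times> I) p) \<partial>(lborel \<Otimes>\<^sub>M lborel))\<^sup>2"
      unfolding S_def by (intro arg_cong[where f="\<lambda>a. a\<^sup>2"] nn_integral_cong) (auto simp: indicator_def)
    also have "\<dots> \<le> (\<integral>\<^sup>+ p. (ennreal (indicator (I \<times> I) p * \<bar>w (fst p) (snd p)\<bar>))\<^sup>2 \<partial>(lborel \<Otimes>\<^sub>M lborel)) * (\<integral>\<^sup>+ p. (ennreal (indicator (I \<times> I) p))\<^sup>2 \<partial>(lborel \<Otimes>\<^sub>M lborel))"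
      by (rule Cauchy_Schwarz_nn_integral) measurable
    also have "(\<integral>\<^sup>+ p. (ennreal (indicator (I \<times> I) p))\<^sup>2 \<partial>(lborel \<Otimes>\<^sub>M lborel)) = (\<integral>\<^sup>+ p. indicator (I \<times> I) p \<partial>(lborel \<Otimes>\<^sub>M lborel))"
      by (intro nn_integral_cong) (auto simp: indicator_def)
    also have "\<dots> = emeasure (lborel \<Otimes>\<^sub>M lborel) (I \<times> I)" by (rule nn_integral_indicator[OF sqm])
    also have "\<dots> = 1" unfolding I_def by (subst lborel.emeasure_pair_measure_Times) auto
    also have "(\<integral>\<^sup>+ p. (ennreal (indicator (I \<times> I) p * \<bar>w (fst p) (snd p)\<bar>))\<^sup>2 \<partial>(lborel \<Otimes>\<^sub>M lborel)) = ennreal A"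
      unfolding Qeq[symmetric] by (intro nn_integral_cong) (auto simp: indicator_def ennreal_power)
    finally show ?thesis by simp
  qed
  have Fx: "set_integrable lborel {0..1} (\<lambda>r. v r (\<phi> r x)) \<and> \<phi> 1 x - \<phi> 0 x = (LINT r:{0..1}|lborel. v r (\<phi> r x))"
  proof -
    have "\<forall>s t. 0 \<le> s \<and> s < t \<and> t \<le> 1 \<longrightarrow>
        set_integrable lborel {s..t} (\<lambda>r. v r (\<phi> r x)) \<and>
        \<phi> t x - \<phi> s x = (LINT r:{s..t}|lborel. v r (\<phi> r x))"
      using F x unfolding lagrangian_flow_def by blast
    then show ?thesis by (metis order_refl zero_less_one)
  qed
  have phiI: "\<phi> r x \<in> I" if "r \<in> I" for r
    using F x that unfolding lagrangian_flow_def I_def by blast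
  have D: "ennreal \<bar>\<phi> 1 x - \<phi> 0 x\<bar> \<le> S"
  proof -
    have "\<bar>\<phi> 1 x - \<phi> 0 x\<bar> = norm (integral\<^sup>L lborel (\<lambda>r. indicator {0..1} r *\<^sub>R v r (\<phi> r x)))"
      using Fx by (simp add: set_lebesgue_integral_def)
    also have "\<dots> \<le> (\<integral>\<^sup>+ r. norm (indicator {0..1} r *\<^sub>R v r (\<phi> r x)) \<partial>lborel)"
      using Fx unfolding set_integrable_def by (intro integral_norm_bound_ennreal) auto
    also have "\<dots> \<le> (\<integral>\<^sup>+ t. (if t \<in> I then N t else 0) \<partial>lborel)"
    proof (intro nn_integral_mono)
      fix r show "ennreal (norm (indicator {0..1} r *\<^sub>R v r (\<phi> r x))) \<le> (if r \<in> I then N r else 0)"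
        using vbound[of r "\<phi> r x"] phiI[of r] by (auto simp: I_def indicator_def)
    qed
    finally show ?thesis using Ston by simp
  qed
  define h where "h p = indicator (I \<times> I) p * (v (fst p) (snd p))\<^sup>2" for p
  have heq: "h = (\<lambda>p. indicator (I \<times> I) p * (LINT y:{0..snd p}|lborel. w (fst p) y)\<^sup>2)"
  proof (rule ext)
    fix p :: "real \<times> real"
    show "h p = indicator (I \<times> I) p * (LINT y:{0..snd p}|lborel. w (fst p) y)\<^sup>2"
      unfolding h_def using wt[of "fst p"] by (cases p) (auto simp: indicator_def)
  qed
  have hm[measurable]: "h \<in> borel_measurable (lborel \<Otimes>\<^sub>M lborel)"
    unfolding heq using Vmeas[OF wm] by measurable
  have hfin: "(\<integral>\<^sup>+ p. ennreal (norm (h p)) \<partial>(lborel \<Otimes>\<^sub>M lborel)) < \<infinity>"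
  proof -
    have m: "(\<lambda>p. ennreal (h p)) \<in> borel_measurable (lborel \<Otimes>\<^sub>M lborel)" by measurable
    have "(\<integral>\<^sup>+ p. ennreal (norm (h p)) \<partial>(lborel \<Otimes>\<^sub>M lborel)) = (\<integral>\<^sup>+ p. ennreal (h p) \<partial>(lborel \<Otimes>\<^sub>M lborel))"
      by (intro nn_integral_cong) (simp add: h_def)
    also have "\<dots> = (\<integral>\<^sup>+ t. \<integral>\<^sup>+ y. ennreal (h (t, y)) \<partial>lborel \<partial>lborel)"
      using lborel.nn_integral_fst[OF m] by simp
    also have "\<dots> \<le> (\<integral>\<^sup>+ t. (if t \<in> I then Q2 t else 0) \<partial>lborel)"
    proof (intro nn_integral_mono)
      fix t
      show "(\<integral>\<^sup>+ y. ennreal (h (t, y)) \<partial>lborel) \<le> (if t \<in> I then Q2 t else 0)"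
      proof (cases "t \<in> I")
        case True
        have "(\<integral>\<^sup>+ y. ennreal (h (t, y)) \<partial>lborel) \<le> (\<integral>\<^sup>+ y. (N t)\<^sup>2 * indicator I y \<partial>lborel)"
        proof (intro nn_integral_mono)
          fix y
          show "ennreal (h (t, y)) \<le> (N t)\<^sup>2 * indicator I y"
          proof (cases "y \<in> I")
            case True
            have "ennreal ((v t y)\<^sup>2) = (ennreal \<bar>v t y\<bar>)\<^sup>2" by (simp add: ennreal_power)
            also have "\<dots> \<le> (N t)\<^sup>2" by (intro power_mono vbound) (use \<open>t \<in> I\<close> True in auto)
            finally show ?thesis using True \<open>t \<in> I\<close> by (simp add: h_def)
          qed (simp add: h_def)
        qed
        also have "\<dots> = (N t)\<^sup>2 * emeasure lborel I"
          by (rule nn_integral_cmult_indicator) (simp add: I_def)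
        also have "\<dots> = (N t)\<^sup>2" by (simp add: I_def)
        also have "\<dots> \<le> Q2 t" by (rule CS)
        finally show ?thesis using True by simp
      qed (simp add: h_def)
    qed
    also have "\<dots> = ennreal A" using Qton Qeq by simp
    also have "\<dots> < \<infinity>" by simp
    finally show ?thesis .
  qed
  have hint: "integrable (lborel \<Otimes>\<^sub>M lborel) h"
    by (rule integrableI_bounded[OF hm hfin])
  define g where "g p = indicator (I \<times> I) p * ((v (fst p) (snd p))\<^sup>2 + (1/4) * (w (fst p) (snd p))\<^sup>2)" for p
  have geq: "g = (\<lambda>p. h p + (1/4) * (indicator (I \<times> I) p * (w (fst p) (snd p))\<^sup>2))"
    by (rule ext) (simp add: g_def h_def algebra_simps)
  have gint: "integrable (lborel \<Otimes>\<^sub>M lborel) g"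
    unfolding geq by (rule Bochner_Integration.integrable_add[OF hint integrable_mult_right[OF wint]])
  have Eeq: "energy v w = integral\<^sup>L (lborel \<Otimes>\<^sub>M lborel) g"
  proof -
    have "energy v w = (\<integral> t. (\<integral> y. g (t, y) \<partial>lborel) \<partial>lborel)"
      unfolding energy_def set_lebesgue_integral_def
    proof (rule Bochner_Integration.integral_cong[OF refl])
      fix t
      have "indicator {0..1} t *\<^sub>R (\<integral> y. indicator {0..1} y *\<^sub>R ((v t y)\<^sup>2 + 1 / 4 * (w t y)\<^sup>2) \<partial>lborel)
         = (\<integral> y. indicator {0..1} t * (indicator {0..1} y * ((v t y)\<^sup>2 + 1 / 4 * (w t y)\<^sup>2)) \<partial>lborel)"
        by simp
      also have "\<dots> = (\<integral> y. g (t, y) \<partial>lborel)"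
        by (rule Bochner_Integration.integral_cong[OF refl]) (simp add: g_def I_def indicator_def)
      finally show "indicator {0..1} t *\<^sub>R (\<integral> y. indicator {0..1} y *\<^sub>R ((v t y)\<^sup>2 + 1 / 4 * (w t y)\<^sup>2) \<partial>lborel)
         = (\<integral> y. g (t, y) \<partial>lborel)" .
    qed
    also have "\<dots> = integral\<^sup>L (lborel \<Otimes>\<^sub>M lborel) g"
      using lborel_pair.integral_fst'[OF gint] by simp
    finally show ?thesis .
  qed
  have AE: "A / 4 \<le> energy v w"
  proof -
    have "A / 4 = integral\<^sup>L (lborel \<Otimes>\<^sub>M lborel) (\<lambda>p. (1/4) * (indicator (I \<times> I) p * (w (fst p) (snd p))\<^sup>2))"
      unfolding A_def by simp
    also have "\<dots> \<le> integral\<^sup>L (lborel \<Otimes>\<^sub>M lborel) g"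
      by (intro integral_mono gint integrable_mult_right wint) (auto simp: g_def indicator_def)
    finally show ?thesis using Eeq by simp
  qed
  define \<Delta> where "\<Delta> = \<bar>\<phi> 1 x - \<phi> 0 x\<bar>"
  have "ennreal (\<Delta>\<^sup>2) = (ennreal \<Delta>)\<^sup>2" by (simp add: \<Delta>_def ennreal_power)
  also have "\<dots> \<le> S\<^sup>2" by (intro power_mono) (use D \<Delta>_def in auto)
  also have "\<dots> \<le> ennreal A" by (rule SQ)
  finally have "\<Delta>\<^sup>2 \<le> A" using Anonneg by (simp add: ennreal_le_iff)
  then have d2: "\<Delta>\<^sup>2 \<le> 4 * energy v w" using AE by simp
  have "\<Delta> = sqrt (\<Delta>\<^sup>2)" by (simp add: \<Delta>_def)
  also have "\<dots> \<le> sqrt (4 * energy v w)" using d2 by (rule real_sqrt_le_mono)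
  also have "\<dots> = 2 * sqrt (energy v w)" by (simp add: real_sqrt_mult)
  finally show ?thesis by (simp add: \<Delta>_def)
qed

theorem mainTheorem2:
  fixes \<phi>0 \<phi>1 :: "real \<Rightarrow> real"
  assumes "\<phi>0 \<in> Mon_plus" and "\<phi>1 \<in> Mon_plus"
  shows "ereal (SUP x\<in>{0..1}. \<bar>\<phi>0 x - \<phi>1 x\<bar>) \<le> 2 * dist_Mon \<phi>0 \<phi>1"
proof -
  define s where "s = (SUP x\<in>{0..1::real}. \<bar>\<phi>0 x - \<phi>1 x\<bar>)"
  have "ereal (s / 2) \<le> dist_Mon \<phi>0 \<phi>1"
    unfolding dist_Mon_def
  proof (rule INF_greatest)
    fix p assume "p \<in> admissible \<phi>0 \<phi>1"
    then obtain v w \<phi> where p: "p = (v, w)" and L: "L2_H10 v w" and F: "lagrangian_flow v \<phi>"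
      and b: "\<forall>x\<in>{0..1}. \<phi> 0 x = \<phi>0 x \<and> \<phi> 1 x = \<phi>1 x"
      unfolding admissible_def by auto
    have "s \<le> 2 * sqrt (energy v w)"
      unfolding s_def
    proof (rule cSUP_least)
      fix x :: real assume x: "x \<in> {0..1}"
      have "\<bar>\<phi> 1 x - \<phi> 0 x\<bar> \<le> 2 * sqrt (energy v w)" by (rule core[OF L F x])
      then show "\<bar>\<phi>0 x - \<phi>1 x\<bar> \<le> 2 * sqrt (energy v w)" using b x by (simp add: abs_minus_commute)
    qed simp
    then show "ereal (s / 2) \<le> ereal (sqrt (energy (fst p) (snd p)))" using p by simp
  qed
  then have "2 * ereal (s / 2) \<le> 2 * dist_Mon \<phi>0 \<phi>1"
    by (rule ereal_mult_left_mono) simp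
  then show ?thesis unfolding s_def by simp
qed
end
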